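(* Let $(M,g)$ be a Riemannian manifold of dimension $n$, and let $N\ge1$ (with $2N\le n$ if $n$ is even). Then the operator-valued polynomial $$\pi_{2N}(\lambda)=\sum_{k=1}^N \mathcal{C}_{2N}^{(k)}\frac{1}{(N-k)!}\left(\lambda+\frac n2-N\right)^{N-k}$$ satisfies $$\pi_{2N}\!\left(-\frac n2+2N-j\right)=(-1)^jP_{2j}\,\pi_{2N-2j}\!\left(-\frac n2+2N-j\right),\quad j=1,\dots,N-1,$$ and $$\pi_{2N}\!\left(-\frac n2+N\right)=(-1)^{N-1}P_{2N}.$$
   Context: $P_{2N}$ denote the GJMS-operators of $(M,g)$ (conformally covariant operators $\Delta^N+$ lower order terms, $-\Delta\ge0$). A composition $I=(I_1,\dots,I_r)$ is an ordered sequence of integers $I_j\ge1$ with size $|I|=\sum I_j$; $P_{2I}=P_{2I_1}\circ\cdots\circ P_{2I_r}$. Multiplicities: $m_I^{(1)}=m_I=-(-1)^r|I|!(|I|-1)!\prod_{j=1}^r\frac{1}{I_j!(I_j-1)!}\prod_{j=1}^{r-1}\frac{1}{I_j+I_{j+1}}$ (empty products $=1$). The Stirling numbers of the first kind $s(n,k)$ are defined by $\sum_{k=0}^n s(n,k)x^k=x(x-1)\cdots(x-n+1)$. For $k\ge2$: if $a\ge1$, $J$ a non-empty composition, $a+|J|=N$ and $2\le k\le N-1$, $$m^{(k)}_{(a,J)}=\frac{\sum_{j=0}^{k-1}s(N,N-j)|J|^{k-1-j}}{(N-1)\cdots(N-k+1)}\,m^{(1)}_{(a,J)},$$ and for $2\le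 k\le N$, $m^{(k)}_{(N)}=\frac{s(N,N-k+1)}{(N-1)\cdots(N-k+1)}m^{(1)}_{(N)}$. Define $\mathcal{C}^{(k)}_{2N}=\sum_{|I|=N}m_I^{(k)}P_{2I}$ for $1\le k\le N-1$ and $\mathcal{C}^{(N)}_{2N}=(-1)^{N-1}P_{2N}$. The polynomials $\pi_{2M}$ for $M<N$ are defined by the same formula with $N$ replaced by $M$. *)

theory Defs
  imports Complex_Main "HOL-Computational_Algebra.Polynomial"
begin

definition stirling1 :: "nat \<Rightarrow> nat \<Rightarrow> real" where
  "stirling1 n k = coeff (\<Prod>i<n. [:- real i, 1:]) k"

definition compositions :: "nat \<Rightarrow> nat list set" where
  "compositions N = {I. (\<forall>a\<in>set I. 1 \<le> a) \<and> sum_list I = N}"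

definition mult1 :: "nat list \<Rightarrow> real" where
  "mult1 I = - ((-1) ^ length I) * fact (sum_list I) * fact (sum_list I - 1)
     * (\<Prod>j<length I. 1 / (fact (I ! j) * fact (I ! j - 1)))
     * (\<Prod>j<length I - 1. 1 / real (I ! j + I ! (j + 1)))"

definition multk :: "nat \<Rightarrow> nat list \<Rightarrow> real" where
  "multk k I =
    (if k = 1 then mult1 I
     else (let N = sum_list I; d = (\<Prod>i\<in>{1..k-1}. real (N - i)) in
       if length I = 1 then stirling1 N (N - k + 1) / d * mult1 I
       else (\<Sum>j<k. stirling1 N (N - j) * real (sum_list (tl I)) ^ (k - 1 - j)) / d
              * mult1 I))"

text \<open>P_{2I} = P_{2 I_1} o ... o P_{2 I_r}; here P j stands for the GJMS operator P_{2j}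
  and composition is the multiplication of the operator algebra.\<close>
definition Pcomp :: "(nat \<Rightarrow> 'a::real_algebra_1) \<Rightarrow> nat list \<Rightarrow> 'a" where
  "Pcomp P I = prod_list (map P I)"

definition Cop :: "(nat \<Rightarrow> 'a::real_algebra_1) \<Rightarrow> nat \<Rightarrow> nat \<Rightarrow> 'a" where
  "Cop P N k = (if k = N then (-1) ^ (N - 1) *\<^sub>R P N
                else (\<Sum>I\<in>compositions N. multk k I *\<^sub>R Pcomp P I))"

definition piop :: "(nat \<Rightarrow> 'a::real_algebra_1) \<Rightarrow> nat \<Rightarrow> nat \<Rightarrow> real \<Rightarrow> 'a" where
  "piop P n N lam = (\<Sum>k\<in>{1..N}. (1 / fact (N - k) * (lam + real n / 2 - real N) ^ (N - k))
                                   *\<^sub>R Cop P N k)"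

end

theory Submission imports Defs begin

definition pN :: "nat \<Rightarrow> real poly" where "pN N = (\<Prod>i<N. [:- real i, 1:])"
definition qN :: "nat \<Rightarrow> nat \<Rightarrow> real poly" where
  "qN N b = (\<Prod>i\<in>{..<N}-{b}. [:- real i, 1:])"

lemma stirling_pN: "stirling1 N t = coeff (pN N) t"
  by (simp add: stirling1_def pN_def)

lemma degree_pN: "degree (pN N) = N"
  unfolding pN_def by (subst degree_prod_sum_eq) auto

lemma lead_pN: "coeff (pN N) N = 1"
proof -
  have "coeff (pN N) N = lead_coeff (pN N)" by (simp add: degree_pN)
  also have "\<dots> = 1" unfolding pN_def lead_coeff_prod by simp
  finally show ?thesis .
qed

lemma degree_qN: "b < N \<Longrightarrow> degree (qN N b) < N"
proof -
  assume b: "b < N"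
  have "degree (qN N b) = (\<Sum>i\<in>{..<N}-{b}. degree [:- real i, 1:])"
    unfolding qN_def by (subst degree_prod_sum_eq) auto
  also have "\<dots> = card ({..<N}-{b})" by simp
  also have "\<dots> = N - 1" using b by (simp add: card_Diff_singleton)
  finally show ?thesis using b by simp
qed

lemma pN_qN: "b < N \<Longrightarrow> pN N = [:- real b, 1:] * qN N b"
  unfolding pN_def qN_def by (subst prod.remove[of _ b]) auto

lemma coeff_qN: assumes b: "b < N"
  shows "coeff (qN N b) m = (\<Sum>t\<in>{m<..N}. coeff (pN N) t * real b ^ (t - m - 1))"
proof (induction "N - m" arbitrary: m rule: less_induct)
  case less
  show ?case
  proof (cases "N \<le> m")
    case True
    then have "coeff (qN N b) m = 0" using degree_qN[OF b] by (intro coeff_eq_0) simp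
    then show ?thesis using True by simp
  next
    case False
    have IH: "coeff (qN N b) (Suc m) = (\<Sum>t\<in>{Suc m<..N}. coeff (pN N) t * real b ^ (t - Suc m - 1))"
      using less False by simp
    have "coeff (pN N) (Suc m) = - real b * coeff (qN N b) (Suc m) + coeff (qN N b) m"
      unfolding pN_qN[OF b] by (simp add: mult_pCons_left)
    then have e: "coeff (qN N b) m = coeff (pN N) (Suc m) + real b * coeff (qN N b) (Suc m)" by simp
    have s: "{m<..N} = insert (Suc m) {Suc m<..N}" using False by auto
    have "(\<Sum>t\<in>{m<..N}. coeff (pN N) t * real b ^ (t - m - 1))
        = coeff (pN N) (Suc m) + (\<Sum>t\<in>{Suc m<..N}. coeff (pN N) t * real b ^ (t - m - 1))"
      unfolding s by simp
    also have "(\<Sum>t\<in>{Suc m<..N}. coeff (pN N) t * real b ^ (t - m - 1))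
       = real b * (\<Sum>t\<in>{Suc m<..N}. coeff (pN N) t * real b ^ (t - Suc m - 1))"
      unfolding sum_distrib_left
    proof (rule sum.cong)
      fix t assume "t \<in> {Suc m<..N}"
      then have "t - m - 1 = Suc (t - Suc m - 1)" by auto
      then show "coeff (pN N) t * real b ^ (t - m - 1) = real b * (coeff (pN N) t * real b ^ (t - Suc m - 1))"
        by simp
    qed simp
    finally show ?thesis using e IH by simp
  qed
qed

lemma sum_rev_top: fixes f :: "nat \<Rightarrow> real" and k N :: nat shows "k \<le> N \<Longrightarrow> (\<Sum>t\<in>{N-k<..N}. f t) = (\<Sum>j<k. f (N - j))"
proof (induction k)
  case 0 then show ?case by simp
next
  case (Suc k)
  have s: "{N - Suc k<..N} = insert (N - k) {N-k<..N}" using Suc.prems by auto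
  show ?case unfolding s using Suc by simp
qed

lemma poly_qN_zero: "b < N \<Longrightarrow> i < N \<Longrightarrow> i \<noteq> b \<Longrightarrow> poly (qN N b) (real i) = 0"
  unfolding qN_def poly_prod by (auto intro!: prod_zero bexI[of _ i])

lemma prod_low: "(\<Prod>i<b. real b - real i) = fact b"
proof (induction b)
  case 0 then show ?case by simp
next
  case (Suc b)
  have "(\<Prod>i<Suc b. real (Suc b) - real i) = (\<Prod>i<b. real (Suc b) - real (Suc i)) * real (Suc b)"
    by (subst prod.lessThan_Suc_shift) simp
  also have "(\<Prod>i<b. real (Suc b) - real (Suc i)) = (\<Prod>i<b. real b - real i)" by simp
  finally show ?case using Suc by (simp add: fact_Suc)
qed

lemma prod_high: "(\<Prod>i\<in>{b<..<b+1+c}. real b - real i) = (-1)^c * fact c"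
proof (induction c)
  case 0
  have "{b<..<b+1+0} = {}" by auto
  then show ?case by simp
next
  case (Suc c)
  have s: "{b<..<b+1+Suc c} = insert (b+1+c) {b<..<b+1+c}" by auto
  show ?case unfolding s using Suc by (simp add: fact_Suc algebra_simps)
qed

lemma poly_qN_self: assumes b: "b < N"
  shows "poly (qN N b) (real b) = (-1)^(N-1-b) * fact b * fact (N-1-b)"
proof -
  have s: "{..<N}-{b} = {..<b} \<union> {b<..<b+1+(N-1-b)}" using b by auto
  have "poly (qN N b) (real b) = (\<Prod>i\<in>{..<N}-{b}. real b - real i)"
    unfolding qN_def poly_prod by simp
  also have "\<dots> = (\<Prod>i<b. real b - real i) * (\<Prod>i\<in>{b<..<b+1+(N-1-b)}. real b - real i)"
    unfolding s by (subst prod.union_disjoint) auto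
  finally show ?thesis unfolding prod_low prod_high by simp
qed

lemma prod_fall: "M \<le> N \<Longrightarrow> (\<Prod>i<M. real N - real i) * fact (N - M) = fact N"
proof (induction M)
  case 0 then show ?case by simp
next
  case (Suc M)
  have "fact (N - M) = real (N - M) * (fact (N - Suc M) :: real)"
    using Suc.prems by (metis Suc_diff_Suc Suc_le_lessD fact_Suc of_nat_Suc)
  then show ?case using Suc by (simp add: of_nat_diff)
qed

lemma poly_qN_other: assumes b: "b < M" and MN: "M \<le> N"
  shows "poly (qN M b) (real N) * (real N - real b) * fact (N - M) = fact N"
proof -
  have "(\<Prod>i<M. real N - real i) = (real N - real b) * poly (qN M b) (real N)"
    unfolding qN_def poly_prod using b by (subst prod.remove[of _ b]) auto
  then show ?thesis using prod_fall[OF MN] by (simp add: mult.commute)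
qed

lemma mult1_Cons:
  fixes j c :: nat and J' :: "nat list"
  assumes "j \<ge> 1"
  shows "mult1 (j # c # J') * (fact (sum_list (c#J')) * fact (sum_list (c#J') - 1))
        * (fact j * fact (j - 1) * real (j + c))
       = - mult1 (c#J') * (fact (j + sum_list (c#J')) * fact (j + sum_list (c#J') - 1))"
proof -
  define M where "M = sum_list (c#J')"
  define A where "A = (\<Prod>i<length (c#J'). 1 / (fact ((c#J') ! i) * fact ((c#J') ! i - 1)) :: real)"
  define B where "B = (\<Prod>i<length (c#J') - 1. 1 / real ((c#J') ! i + (c#J') ! (i + 1)))"
  have m1: "mult1 (c#J') = - ((-1) ^ length (c#J')) * fact M * fact (M - 1) * A * B"
    unfolding mult1_def A_def B_def M_def by simp
  have A2: "(\<Prod>i<length (j#c#J'). 1 / (fact ((j#c#J') ! i) * fact ((j#c#J') ! i - 1)) :: real)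
      = 1 / (fact j * fact (j - 1)) * A"
    unfolding A_def by (simp only: length_Cons prod.lessThan_Suc_shift nth_Cons_0 nth_Cons_Suc)
  have B2: "(\<Prod>i<length (j#c#J') - 1. 1 / real ((j#c#J') ! i + (j#c#J') ! (i + 1)))
      = 1 / real (j + c) * B"
    unfolding B_def by (simp only: length_Cons diff_Suc_1 prod.lessThan_Suc_shift nth_Cons_0 nth_Cons_Suc Suc_eq_plus1[symmetric])
  have m2: "mult1 (j#c#J') = - ((-1) ^ length (j#c#J')) * fact (j + M) * fact (j + M - 1)
      * (1 / (fact j * fact (j - 1)) * A) * (1 / real (j + c) * B)"
    unfolding mult1_def A2[symmetric] B2[symmetric] M_def by simp
  have pos: "real (j + c) > 0" "(fact j :: real) > 0" "(fact (j-1) :: real) > 0" using assms by auto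
  define x where "x = real (j + c)"
  define y where "y = (fact j * fact (j - 1) :: real)"
  have xy: "x \<noteq> 0" "y \<noteq> 0" using pos unfolding x_def y_def by auto
  have m2': "mult1 (j#c#J') = (- ((-1) ^ length (j#c#J')) * fact (j + M) * fact (j + M - 1) * A * B) / (y * x)"
    unfolding m2 x_def[symmetric] y_def[symmetric] by simp
  have "mult1 (j # c # J') * (fact M * fact (M - 1)) * (y * x)
     = - ((-1) ^ length (j#c#J')) * fact (j + M) * fact (j + M - 1) * A * B * (fact M * fact (M - 1))"
    unfolding m2' using xy by simp
  also have "\<dots> = - mult1 (c#J') * (fact (j + M) * fact (j + M - 1))"
    unfolding m1 by simp
  finally show ?thesis unfolding M_def[symmetric] x_def y_def by (simp add: mult.assoc)
qed

lemma comp_Cons: "(a # J) \<in> compositions N \<longleftrightarrow> 1 \<le> a \<and> a \<le> N \<and> J \<in> compositions (N - a)"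
  unfolding compositions_def by auto

lemma comp_Nil: "[] \<in> compositions N \<longleftrightarrow> N = 0"
  unfolding compositions_def by auto

lemma len_le_sum: "(\<forall>a\<in>set I. 1 \<le> a) \<Longrightarrow> length I \<le> sum_list (I::nat list)"
  by (induction I) auto

lemma finite_comp: "finite (compositions N)"
proof (rule finite_subset)
  show "compositions N \<subseteq> {xs. set xs \<subseteq> {..N} \<and> length xs \<le> N}"
    unfolding compositions_def using len_le_sum member_le_sum_list by fastforce
  show "finite {xs. set xs \<subseteq> {..N} \<and> length xs \<le> N}"
    by (rule finite_lists_length_le) simp
qed

lemma fact_prod_low: "k < N \<Longrightarrow> (\<Prod>i\<in>{1..k}. real (N - i)) * fact (N - 1 - k) = fact (N - 1)"
proof (induction k)
  case 0 then show ?case by simp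
next
  case (Suc k)
  obtain d where d: "N = Suc (Suc k + d)" using less_imp_Suc_add[OF Suc.prems] by blast
  have e1: "N - 1 - k = Suc d" "N - 1 - Suc k = d" "N - Suc k = Suc d" using d by auto
  have "(\<Prod>i\<in>{1..k}. real (N - i)) * fact (N - 1 - k) = fact (N - 1)" using Suc by simp
  then show ?case unfolding e1 by (simp add: atLeastAtMostSuc_conv e1 fact_Suc algebra_simps)
qed

lemma coeff_qN_rev: assumes b: "b < N" and k: "1 \<le> k" "k \<le> N"
  shows "coeff (qN N b) (N - k) = (\<Sum>j<k. stirling1 N (N - j) * real b ^ (k - 1 - j))"
proof -
  have "coeff (qN N b) (N - k) = (\<Sum>t\<in>{N-k<..N}. coeff (pN N) t * real b ^ (t - (N - k) - 1))"
    by (rule coeff_qN[OF b])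
  also have "\<dots> = (\<Sum>j<k. coeff (pN N) (N - j) * real b ^ (N - j - (N - k) - 1))"
    by (rule sum_rev_top[OF k(2)])
  also have "\<dots> = (\<Sum>j<k. stirling1 N (N - j) * real b ^ (k - 1 - j))"
    by (rule sum.cong) (use k in \<open>auto simp: stirling_pN\<close>)
  finally show ?thesis .
qed

lemma multk_eq: assumes I: "I \<in> compositions N" and k: "1 \<le> k" "k < N"
  shows "multk k I = coeff (qN N (N - hd I)) (N - k) / (\<Prod>i\<in>{1..k-1}. real (N - i)) * mult1 I"
proof -
  obtain a J where aJ: "I = a # J" using I k by (cases I) (auto simp: comp_Nil)
  have a: "1 \<le> a" "a \<le> N" and J: "J \<in> compositions (N - a)" using I unfolding aJ comp_Cons by auto
  have sJ: "sum_list J = N - a" using J unfolding compositions_def by auto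
  have sI: "sum_list I = N" using I unfolding compositions_def by auto
  have b: "N - a < N" using a k by auto
  have c: "coeff (qN N (N - hd I)) (N - k) = (\<Sum>j<k. stirling1 N (N - j) * real (N - a) ^ (k - 1 - j))"
    unfolding aJ using coeff_qN_rev[OF b k(1)] k by simp
  show ?thesis
  proof (cases "k = 1")
    case True
    then show ?thesis unfolding c by (simp add: multk_def stirling_pN lead_pN)
  next
    case False
    show ?thesis
    proof (cases "J = []")
      case True
      then have aN: "a = N" using sJ a by simp
      obtain k' where k': "k = Suc (Suc k')" using False k by (cases k; cases "k - 1") auto
      have "(\<Sum>j<k. stirling1 N (N - j) * real (N - a) ^ (k - 1 - j)) = stirling1 N (N - k + 1)"
      proof -
        have z: "(\<Sum>j<Suc k'. stirling1 N (N - j) * (0::real) ^ (Suc k' - j)) = 0"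
          by (rule sum.neutral) auto
        have z2: "(\<Sum>j<k'. stirling1 N (N - j) * (0::real) ^ (Suc k' - j)) = 0"
          by (rule sum.neutral) auto
        have "(\<Sum>j<k. stirling1 N (N - j) * real (N - a) ^ (k - 1 - j))
            = (\<Sum>j<Suc (Suc k'). stirling1 N (N - j) * (0::real) ^ (Suc k' - j))"
          unfolding aN k' by simp
        also have "\<dots> = stirling1 N (N - Suc k')"
          by (subst lessThan_Suc) (simp add: z z2)
        also have "N - Suc k' = N - k + 1" using k k' by simp
        finally show ?thesis .
      qed
      then show ?thesis unfolding c using False True sI aJ by (simp add: multk_def)
    next
      case Jne: False
      then show ?thesis unfolding c using False sI sJ aJ by (simp add: multk_def)
    qed
  qed
qed

definition coefk :: "nat \<Rightarrow> nat list \<Rightarrow> nat \<Rightarrow> real" where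
  "coefk N I k = coeff (qN N (N - hd I)) (N - k) / (\<Prod>i\<in>{1..k-1}. real (N - i)) * mult1 I"

lemma mult1_single: "N \<ge> 1 \<Longrightarrow> mult1 [N] = 1"
  unfolding mult1_def by simp

lemma Cop_eq: assumes N: "N \<ge> 1" and k: "1 \<le> k" "k \<le> N"
  shows "Cop P N k = (\<Sum>I\<in>compositions N. coefk N I k *\<^sub>R Pcomp P I)"
proof (cases "k < N")
  case True
  then show ?thesis unfolding Cop_def using k
    by (auto intro!: sum.cong simp: multk_eq coefk_def)
next
  case False
  then have kN: "k = N" using k by simp
  have mem: "[N] \<in> compositions N" using N unfolding compositions_def by simp
  have zero: "coefk N I k = 0" if I: "I \<in> compositions N - {[N]}" for I
  proof -
    have I': "I \<in> compositions N" using I by auto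
    obtain a J where aJ: "I = a # J" using I' N by (cases I) (auto simp: comp_Nil)
    have a: "1 \<le> a" "a \<le> N" and J: "J \<in> compositions (N - a)" using I' unfolding aJ comp_Cons by auto
    have Jne: "J \<noteq> []"
    proof
      assume "J = []"
      then have "I = [N]" using I' aJ unfolding compositions_def by simp
      then show False using I by simp
    qed
    have "N - a \<noteq> 0" using J Jne by (cases J) (auto simp: comp_Cons)
    then have "poly (qN N (N - a)) (real 0) = 0" using a N by (intro poly_qN_zero) auto
    then show ?thesis unfolding coefk_def aJ kN by (simp add: poly_0_coeff_0)
  qed
  have c1: "coeff (qN N 0) 0 = (-1)^(N-1) * fact (N - 1)"
    using poly_qN_self[of 0 N] N by (simp add: poly_0_coeff_0)
  have c2: "(\<Prod>i\<in>{1..N-1}. real (N - i)) = fact (N - 1)"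
    using fact_prod_low[of "N - 1" N] N by simp
  have single: "coefk N [N] k = (-1)^(N-1)"
    unfolding coefk_def kN using c1 c2 mult1_single[OF N] by simp
  have "(\<Sum>I\<in>compositions N. coefk N I k *\<^sub>R Pcomp P I)
      = coefk N [N] k *\<^sub>R Pcomp P [N] + (\<Sum>I\<in>compositions N - {[N]}. coefk N I k *\<^sub>R Pcomp P I)"
    using finite_comp mem by (subst sum.remove) auto
  also have "(\<Sum>I\<in>compositions N - {[N]}. coefk N I k *\<^sub>R Pcomp P I) = 0"
    using zero by (intro sum.neutral) auto
  finally show ?thesis unfolding Cop_def single using kN by (simp add: Pcomp_def)
qed

lemma sum_rev1: fixes g :: "nat \<Rightarrow> real" and N :: nat shows "(\<Sum>k\<in>{1..N}. g (N - k)) = (\<Sum>m<N. (g m :: real))"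
  by (rule sum.reindex_bij_witness[of _ "\<lambda>m. N - m" "\<lambda>k. N - k"]) auto

lemma poly_lt: fixes p :: "real poly" assumes "degree p < N" shows "poly p x = (\<Sum>m<N. coeff p m * x ^ m)"
proof -
  have "poly p x = (\<Sum>m\<le>degree p. coeff p m * x ^ m)" by (rule poly_altdef)
  also have "\<dots> = (\<Sum>m<N. coeff p m * x ^ m)"
    using assms by (intro sum.mono_neutral_left) (auto simp: coeff_eq_0)
  finally show ?thesis .
qed

lemma coef_sum: assumes I: "I \<in> compositions N" and N: "N \<ge> 1"
  shows "(\<Sum>k\<in>{1..N}. (1 / fact (N - k) * x ^ (N - k)) * coefk N I k)
       = mult1 I / fact (N - 1) * poly (qN N (N - hd I)) x"
proof -
  obtain a J where aJ: "I = a # J" using I N by (cases I) (auto simp: comp_Nil)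
  have a: "1 \<le> a" "a \<le> N" using I unfolding aJ comp_Cons by auto
  define q where "q = qN N (N - hd I)"
  have dq: "degree q < N" unfolding q_def aJ using a by (intro degree_qN) auto
  have t: "(1 / fact (N - k) * x ^ (N - k)) * coefk N I k
         = mult1 I / fact (N - 1) * (coeff q (N - k) * x ^ (N - k))" if k: "k \<in> {1..N}" for k
  proof -
    have "(\<Prod>i\<in>{1..k-1}. real (N - i)) * fact (N - 1 - (k - 1)) = fact (N - 1)"
      using k by (intro fact_prod_low) auto
    moreover have "N - 1 - (k - 1) = N - k" using k by auto
    ultimately have p: "(\<Prod>i\<in>{1..k-1}. real (N - i)) = fact (N - 1) / fact (N - k)"
      by (simp add: field_simps)
    show ?thesis unfolding coefk_def p q_def by (simp add: field_simps)
  qed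
  have "(\<Sum>k\<in>{1..N}. (1 / fact (N - k) * x ^ (N - k)) * coefk N I k)
      = (\<Sum>k\<in>{1..N}. mult1 I / fact (N - 1) * (coeff q (N - k) * x ^ (N - k)))"
    using t by (rule sum.cong[OF refl])
  also have "\<dots> = mult1 I / fact (N - 1) * (\<Sum>m<N. coeff q m * x ^ m)"
    unfolding sum_distrib_left[symmetric] using sum_rev1[of "\<lambda>m. coeff q m * x ^ m" N] by simp
  also have "\<dots> = mult1 I / fact (N - 1) * poly q x" using poly_lt[OF dq] by simp
  finally show ?thesis unfolding q_def .
qed

definition cf :: "nat \<Rightarrow> nat list \<Rightarrow> real \<Rightarrow> real" where
  "cf N I x = mult1 I / fact (N - 1) * poly (qN N (N - hd I)) x"

lemma piop_eq: assumes N: "N \<ge> 1"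
  shows "piop P n N lam = (\<Sum>I\<in>compositions N. cf N I (lam + real n / 2 - real N) *\<^sub>R Pcomp P I)"
proof -
  define x where "x = lam + real n / 2 - real N"
  have "piop P n N lam = (\<Sum>k\<in>{1..N}. (1 / fact (N - k) * x ^ (N - k)) *\<^sub>R
          (\<Sum>I\<in>compositions N. coefk N I k *\<^sub>R Pcomp P I))"
    unfolding piop_def x_def using N by (intro sum.cong) (auto simp: Cop_eq)
  also have "\<dots> = (\<Sum>k\<in>{1..N}. \<Sum>I\<in>compositions N. ((1 / fact (N - k) * x ^ (N - k)) * coefk N I k) *\<^sub>R Pcomp P I)"
    by (simp add: scaleR_sum_right)
  also have "\<dots> = (\<Sum>I\<in>compositions N. \<Sum>k\<in>{1..N}. ((1 / fact (N - k) * x ^ (N - k)) * coefk N I k) *\<^sub>R Pcomp P I)"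
    by (rule sum.swap)
  also have "\<dots> = (\<Sum>I\<in>compositions N. (\<Sum>k\<in>{1..N}. (1 / fact (N - k) * x ^ (N - k)) * coefk N I k) *\<^sub>R Pcomp P I)"
    by (simp add: scaleR_sum_left)
  also have "\<dots> = (\<Sum>I\<in>compositions N. cf N I x *\<^sub>R Pcomp P I)"
    by (rule sum.cong[OF refl], subst coef_sum) (use N in \<open>auto simp: cf_def\<close>)
  finally show ?thesis unfolding x_def .
qed

lemma alg:
  fixes m1 m0 Q fN fN1 fM fM1 fj fj1 x s :: real
  assumes nz: "fN1 \<noteq> 0" "fM \<noteq> 0" "fM1 \<noteq> 0" "fj \<noteq> 0" "fj1 \<noteq> 0" "x \<noteq> 0"
    and e1: "m1 * (fM * fM1) * (fj * fj1 * x) = - m0 * (fN * fN1)"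
    and e2: "Q * x * fj = fN"
  shows "m1 / fN1 * (- s * fM * fj1) = s * (m0 / fM1 * Q)"
proof -
  have m1: "m1 = - m0 * (fN * fN1) / ((fM * fM1) * (fj * fj1 * x))" using e1 nz by (simp add: field_simps)
  have q: "Q = fN / (x * fj)" using e2 nz by (simp add: field_simps)
  show ?thesis unfolding m1 q using nz by (simp add: field_simps)
qed

lemma coef_match: assumes j: "1 \<le> j" and J: "J \<in> compositions M" and M: "M \<ge> 1"
  shows "cf (j + M) (j # J) (real M) = (-1)^j * cf M J (real (j + M))"
proof -
  define N where "N = j + M"
  obtain c J' where cJ: "J = c # J'" using J M by (cases J) (auto simp: comp_Nil)
  have c: "1 \<le> c" "c \<le> M" using J unfolding cJ comp_Cons by auto
  have sM: "sum_list (c # J') = M" using J unfolding cJ compositions_def by simp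
  have L: "poly (qN N (N - j)) (real M) = (-1)^(j - 1) * fact M * fact (j - 1)"
  proof -
    have "poly (qN N (N - j)) (real (N - j)) = (-1)^(N-1-(N-j)) * fact (N - j) * fact (N-1-(N-j))"
      using M j unfolding N_def by (intro poly_qN_self) auto
    moreover have "N - j = M" "N-1-(N-j) = j - 1" using M j unfolding N_def by auto
    ultimately show ?thesis by simp
  qed
  have R: "poly (qN M (M - c)) (real N) * real (j + c) * fact j = fact N"
  proof -
    have "poly (qN M (M - c)) (real N) * (real N - real (M - c)) * fact (N - M) = fact N"
      using c M unfolding N_def by (intro poly_qN_other) auto
    moreover have "real N - real (M - c) = real (j + c)" "N - M = j" using c unfolding N_def by (auto simp: of_nat_diff)
    ultimately show ?thesis by metis
  qed
  have E: "mult1 (j # c # J') * (fact M * fact (M - 1)) * (fact j * fact (j - 1) * real (j + c))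
       = - mult1 (c#J') * (fact N * fact (N - 1))"
    using mult1_Cons[OF j, of c J'] unfolding sM N_def .
  have s: "(-1::real)^(j - 1) = - ((-1)^j)" using j by (cases j) auto
  have "cf N (j # J) (real M) = mult1 (j # c # J') / fact (N - 1) * (- ((-1)^j) * fact M * fact (j - 1))"
    unfolding cf_def cJ list.sel(1) L s by simp
  also have "\<dots> = (-1)^j * (mult1 (c#J') / fact (M - 1) * poly (qN M (M - c)) (real N))"
    by (rule alg[OF _ _ _ _ _ _ E R]) (use c in auto)
  also have "\<dots> = (-1)^j * cf M J (real N)" unfolding cf_def cJ by simp
  finally show ?thesis unfolding N_def .
qed

theorem theorem2p2:
  fixes P :: "nat \<Rightarrow> 'a::real_algebra_1" and n N :: nat
  assumes "N \<ge> 1" and "even n \<longrightarrow> 2 * N \<le> n"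
  shows "(\<forall>j\<in>{1..N-1}.
            piop P n N (- real n / 2 + 2 * real N - real j)
              = (-1) ^ j *\<^sub>R (P j * piop P n (N - j) (- real n / 2 + 2 * real N - real j)))
         \<and> piop P n N (- real n / 2 + real N) = (-1) ^ (N - 1) *\<^sub>R P N"
proof
  have N: "N \<ge> 1" by fact
  show "\<forall>j\<in>{1..N-1}.
            piop P n N (- real n / 2 + 2 * real N - real j)
              = (-1) ^ j *\<^sub>R (P j * piop P n (N - j) (- real n / 2 + 2 * real N - real j))"
  proof
    fix j assume j: "j \<in> {1..N-1}"
    define M where "M = N - j"
    have jM: "1 \<le> j" "1 \<le> M" "N = j + M" using j unfolding M_def by auto
    define lam where "lam = - real n / 2 + 2 * real N - real j"
    have x1: "lam + real n / 2 - real N = real M" unfolding lam_def using jM by simp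
    have x2: "lam + real n / 2 - real M = real N" unfolding lam_def using jM by simp
    define S where "S = Cons j ` compositions M"
    have SC: "S \<subseteq> compositions N" unfolding S_def using jM by (auto simp: comp_Cons)
    have zero: "cf N I (real M) *\<^sub>R Pcomp P I = 0" if I: "I \<in> compositions N - S" for I
    proof -
      have I': "I \<in> compositions N" using I by auto
      obtain a J where aJ: "I = a # J" using I' N by (cases I) (auto simp: comp_Nil)
      have a: "1 \<le> a" "a \<le> N" and J: "J \<in> compositions (N - a)" using I' unfolding aJ comp_Cons by auto
      have "a \<noteq> j" using I J unfolding aJ S_def M_def by auto
      then have "poly (qN N (N - a)) (real M) = 0"
        using a jM by (intro poly_qN_zero) auto
      then show ?thesis unfolding cf_def aJ by simp
    qed
    have "piop P n N lam = (\<Sum>I\<in>compositions N. cf N I (real M) *\<^sub>R Pcomp P I)"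
      using piop_eq[OF N, of P n lam] unfolding x1 .
    also have "\<dots> = (\<Sum>I\<in>S. cf N I (real M) *\<^sub>R Pcomp P I)"
      using zero SC finite_comp by (intro sum.mono_neutral_right) auto
    also have "\<dots> = (\<Sum>J\<in>compositions M. cf N (j # J) (real M) *\<^sub>R Pcomp P (j # J))"
      unfolding S_def by (subst sum.reindex) (auto simp: inj_on_def)
    also have "\<dots> = (\<Sum>J\<in>compositions M. ((-1)^j * cf M J (real N)) *\<^sub>R (P j * Pcomp P J))"
      using coef_match[OF jM(1) _ jM(2)] jM(3) by (intro sum.cong) (auto simp: Pcomp_def)
    also have "\<dots> = (-1) ^ j *\<^sub>R (P j * (\<Sum>J\<in>compositions M. cf M J (real N) *\<^sub>R Pcomp P J))"
      by (simp add: sum_distrib_left scaleR_sum_right)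
    also have "(\<Sum>J\<in>compositions M. cf M J (real N) *\<^sub>R Pcomp P J) = piop P n M lam"
      using piop_eq[OF jM(2), of P n lam] unfolding x2 by simp
    finally show "piop P n N (- real n / 2 + 2 * real N - real j)
              = (-1) ^ j *\<^sub>R (P j * piop P n (N - j) (- real n / 2 + 2 * real N - real j))"
      unfolding lam_def M_def .
  qed
next
  have "piop P n N (- real n / 2 + real N)
      = (\<Sum>k\<in>{1..N}. (1 / fact (N - k) * (0::real) ^ (N - k)) *\<^sub>R Cop P N k)"
    unfolding piop_def by simp
  also have "\<dots> = (\<Sum>k\<in>{1..N}. if k = N then Cop P N k else 0)"
    by (intro sum.cong) auto
  also have "\<dots> = Cop P N N" using assms(1) by simp
  also have "\<dots> = (-1) ^ (N - 1) *\<^sub>R P N" unfolding Cop_def by simp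
  finally show "piop P n N (- real n / 2 + real N) = (-1) ^ (N - 1) *\<^sub>R P N" .
qed

end
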